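(* There exist Euclidean self-orthogonal linear codes with each of the following parameters: over $\mathbb{F}_4$: $[8,2,4]_4$, $[8,3,4]_4$, $[8,4,4]_4$; over $\mathbb{F}_8$: $[8,3,4]_8$, $[8,4,4]_8$, $[10,4,5]_8$, $[10,5,4]_8$, $[12,4,6]_8$, $[12,5,6]_8$, $[12,6,5]_8$, $[14,5,7]_8$, $[14,6,6]_8$, $[14,7,6]_8$, $[16,5,8]_8$, $[16,6,8]_8$, $[16,7,6]_8$, $[16,8,6]_8$.
   Context: $[n,k,d]_q$ denotes a linear code over $\mathbb{F}_q$ of length $n$, dimension $k$, minimum Hamming distance $d$. A code $\mathcal{C}$ is Euclidean self-orthogonal if $\mathcal{C}\subseteq\mathcal{C}^{\perp_E}$, where $\perp_E$ is the dual under $\sum_ix_iy_i$ (self-dual when equality holds). *)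

theory Defs
  imports "HOL-Analysis.Cartesian_Space" "HOL-Library.Numeral_Type"
begin

text \<open>Codes of length n over a finite field 'a are subsets of 'a^'n, where the
  length n is CARD('n). A linear [n,k,d]_q code is a subspace of dimension k whose
  minimum Hamming distance is d.\<close>

definition hamming_dist :: "'a::zero ^ 'n \<Rightarrow> 'a ^ 'n \<Rightarrow> nat" where
  "hamming_dist x y = card {i. x $ i \<noteq> y $ i}"

definition min_dist :: "('a::zero ^ 'n) set \<Rightarrow> nat" where
  "min_dist C = Min {hamming_dist x y | x y. x \<in> C \<and> y \<in> C \<and> x \<noteq> y}"

definition euclid_dual :: "('a::field ^ 'n) set \<Rightarrow> ('a ^ 'n) set" where
  "euclid_dual C = {y. \<forall>x\<in>C. (\<Sum>i\<in>UNIV. x $ i * y $ i) = 0}"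

definition self_orthogonal :: "('a::field ^ 'n) set \<Rightarrow> bool" where
  "self_orthogonal C \<longleftrightarrow> C \<subseteq> euclid_dual C"

definition linear_code :: "('a::field ^ 'n) set \<Rightarrow> nat \<Rightarrow> nat \<Rightarrow> bool" where
  "linear_code C k d \<longleftrightarrow> vec.subspace C \<and> vec.dim C = k \<and> min_dist C = d"

definition has_SO_code :: "'a::{field,finite} itself \<Rightarrow> 'n::finite itself \<Rightarrow> nat \<Rightarrow> nat \<Rightarrow> bool" where
  "has_SO_code _ _ k d \<longleftrightarrow> (\<exists>C :: ('a ^ 'n) set. linear_code C k d \<and> self_orthogonal C)"

end

theory Submission imports Defs "HOL-Computational_Algebra.Polynomial" begin

definition wt :: "'a::zero ^ 'n \<Rightarrow> nat" where
  "wt x = card {i. x $ i \<noteq> 0}"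

lemma code_lemma:
  fixes \<Phi> :: "'f::{field,finite} ^ 'k \<Rightarrow> 'f ^ 'n"
  assumes lin: "Vector_Spaces.linear (*s) (*s) \<Phi>"
    and lb: "\<And>c. c \<noteq> 0 \<Longrightarrow> wt (\<Phi> c) \<ge> d"
    and d1: "d \<ge> 1"
    and wit: "\<exists>c. c \<noteq> 0 \<and> wt (\<Phi> c) = d"
    and orth: "\<And>c c'. (\<Sum>i\<in>UNIV. \<Phi> c $ i * \<Phi> c' $ i) = 0"
  shows "has_SO_code TYPE('f) TYPE('n) CARD('k) d"
proof -
  interpret L: Vector_Spaces.linear "(*s)" "(*s)" \<Phi> by (rule lin)
  have z: "\<Phi> c = 0 \<Longrightarrow> c = 0" for c
  proof (rule ccontr)
    assume "\<Phi> c = 0" "c \<noteq> 0"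
    then have "wt (\<Phi> c) = 0" by (simp add: wt_def)
    with lb[OF \<open>c \<noteq> 0\<close>] d1 show False by simp
  qed
  have inj: "inj \<Phi>"
  proof (rule injI)
    fix x y assume "\<Phi> x = \<Phi> y"
    then have "\<Phi> (x - y) = 0" by (simp add: L.diff)
    then show "x = y" using z by fastforce
  qed
  let ?C = "range \<Phi>"
  have sub: "vec.subspace ?C"
    using L.subspace_image[OF vec.subspace_UNIV] .
  have dim: "vec.dim ?C = CARD('k)"
    using vec.dim_image_eq[OF lin, of UNIV] inj by (simp add: vec_dim_card inj_on_def card_cart_basis)
  have hd: "hamming_dist x y = wt (x - y)" for x y :: "'f^'n"
    by (simp add: hamming_dist_def wt_def)
  have "{hamming_dist x y | x y. x \<in> ?C \<and> y \<in> ?C \<and> x \<noteq> y} = {wt (\<Phi> c) | c. c \<noteq> 0}"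
  proof (intro equalityI subsetI)
    fix t assume "t \<in> {hamming_dist x y | x y. x \<in> ?C \<and> y \<in> ?C \<and> x \<noteq> y}"
    then obtain a b where "t = wt (\<Phi> a - \<Phi> b)" "\<Phi> a \<noteq> \<Phi> b" by (auto simp: hd)
    then show "t \<in> {wt (\<Phi> c) | c. c \<noteq> 0}"
      by (auto simp: L.diff[symmetric] intro!: exI[of _ "a - b"])
  next
    fix t assume "t \<in> {wt (\<Phi> c) | c. c \<noteq> 0}"
    then obtain c where "t = wt (\<Phi> c)" "c \<noteq> 0" by auto
    then show "t \<in> {hamming_dist x y | x y. x \<in> ?C \<and> y \<in> ?C \<and> x \<noteq> y}"
    proof -
      have "t = hamming_dist (\<Phi> c) (\<Phi> 0)" "\<Phi> c \<noteq> \<Phi> 0"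
        using \<open>t = wt (\<Phi> c)\<close> \<open>c \<noteq> 0\<close> z by (auto simp: hd L.zero)
      then show ?thesis by blast
    qed
  qed
  moreover have "Min {wt (\<Phi> c) | c. c \<noteq> 0} = d"
    using wit lb by (intro Min_eqI) auto
  ultimately have md: "min_dist ?C = d" by (simp add: min_dist_def)
  have so: "self_orthogonal ?C"
    unfolding self_orthogonal_def euclid_dual_def using orth by auto
  show ?thesis unfolding has_SO_code_def linear_code_def
    using sub dim md so by blast
qed


lemma fermat_ff:
  fixes a :: "'f::{field,finite}"
  assumes "a \<noteq> 0"
  shows "a ^ (CARD('f) - 1) = 1"
proof -
  let ?N = "UNIV - {0::'f}"
  have inj: "inj_on ((*) a) ?N" using assms by (auto simp: inj_on_def)
  have img: "(*) a ` ?N = ?N"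
  proof (intro equalityI subsetI)
    fix x assume "x \<in> ?N" then show "x \<in> (*) a ` ?N"
      using assms by (intro image_eqI[of _ _ "x / a"]) auto
  qed (use assms in auto)
  have "prod id ?N = prod id ((*) a ` ?N)" using img by simp
  also have "\<dots> = prod ((*) a) ?N" using prod.reindex[OF inj, of id] by simp
  also have "\<dots> = a ^ card ?N * prod id ?N" by (simp add: prod.distrib)
  finally have e: "prod id ?N = a ^ card ?N * prod id ?N" .
  have "prod id ?N \<noteq> 0" by (simp add: prod_zero_iff)
  with e have "a ^ card ?N = 1" by simp
  moreover have "card ?N = CARD('f) - 1" by (simp add: card_Diff_singleton)
  ultimately show ?thesis by simp
qed

lemma char2_ff:
  assumes "even CARD('f::{field,finite})"
  shows "(2::'f) = 0"
proof -
  have "CARD('f) > 0" by simp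
  then have "CARD('f) \<ge> 2" using assms by presburger
  have "odd (CARD('f) - 1)" using assms \<open>CARD('f) \<ge> 2\<close> by auto
  then have "(-1::'f) ^ (CARD('f) - 1) = -1" by simp
  moreover have "(-1::'f) ^ (CARD('f) - 1) = 1" by (rule fermat_ff) simp
  ultimately have "(-1::'f) = 1" by simp
  then show ?thesis by (metis add_eq_0_iff2 one_add_one)
qed

lemma roots_le:
  fixes P :: "'f::{field,finite} poly"
  assumes "P \<noteq> 0"
  shows "card {x\<in>A. poly P x = 0} \<le> degree P"
proof -
  have "card {x\<in>A. poly P x = 0} \<le> card {x. poly P x = 0}" by (intro card_mono) auto
  also have "\<dots> \<le> degree P" by (rule card_poly_roots_bound[OF assms])
  finally show ?thesis .
qed

lemma powsum_ff:
  assumes ev: "even CARD('f::{field,finite})" and j: "j \<le> CARD('f) - 2"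
  shows "(\<Sum>x\<in>UNIV. (x::'f) ^ j) = 0"
proof (cases "j = 0")
  case True
  obtain k where k: "CARD('f) = 2 * k" using ev by blast
  have "(\<Sum>x\<in>UNIV. (x::'f) ^ j) = of_nat CARD('f)" using True by simp
  also have "\<dots> = 2 * of_nat k" using k by simp
  also have "\<dots> = 0" using char2_ff[OF ev] by simp
  finally show ?thesis .
next
  case False
  let ?P = "monom (1::'f) j - 1"
  have cP: "coeff ?P j = 1" using False by simp
  then have P0: "?P \<noteq> 0" by (metis coeff_0 zero_neq_one)
  have "degree ?P \<le> j" by (intro degree_diff_le) (auto simp: degree_monom_le)
  then have r: "card {x\<in>UNIV - {0}. poly ?P x = 0} \<le> j"
    using roots_le[OF P0, of "UNIV - {0}"] by linarith
  have cN: "card (UNIV - {0::'f}) = CARD('f) - 1" by (simp add: card_Diff_singleton)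
  have "CARD('f) > 0" by simp
  have "\<exists>a\<in>UNIV - {0::'f}. poly ?P a \<noteq> 0"
  proof (rule ccontr)
    assume "\<not> ?thesis"
    then have "{x\<in>UNIV - {0}. poly ?P x = 0} = UNIV - {0}" by auto
    with r cN have "CARD('f) - 1 \<le> j" by simp
    with j False show False by linarith
  qed
  then obtain a where a0': "a \<in> UNIV - {0::'f}" and aj': "poly ?P a \<noteq> 0" by blast
  from a0' have a0: "a \<noteq> 0" by simp
  from aj' have aj: "a ^ j \<noteq> 1" by (simp add: poly_monom)
  have inj: "inj ((*) a)" using a0 by (auto simp: inj_on_def)
  have surj: "range ((*) a) = (UNIV::'f set)"
    using a0 by (auto intro!: image_eqI[of _ _ "_ / a"])
  have "(\<Sum>x\<in>UNIV. x ^ j) = (\<Sum>x\<in>range ((*) a). x ^ j)" using surj by simp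
  also have "\<dots> = (\<Sum>x\<in>UNIV. (a * x) ^ j)" using sum.reindex[OF inj] by simp
  also have "\<dots> = a ^ j * (\<Sum>x\<in>UNIV. x ^ j)" by (simp add: power_mult_distrib sum_distrib_left)
  finally have "(a ^ j - 1) * (\<Sum>x\<in>UNIV. x ^ j) = 0" by (simp add: algebra_simps)
  with aj show ?thesis by simp
qed

lemma polysum_ff:
  fixes P :: "'f::{field,finite} poly"
  assumes ev: "even CARD('f)" and d: "degree P \<le> CARD('f) - 2"
  shows "(\<Sum>x\<in>UNIV. poly P x) = 0"
proof -
  have "(\<Sum>x\<in>UNIV. poly P x) = (\<Sum>x\<in>UNIV. \<Sum>i\<le>degree P. coeff P i * x ^ i)"
    by (simp add: poly_altdef)
  also have "\<dots> = (\<Sum>i\<le>degree P. coeff P i * (\<Sum>x\<in>UNIV. x ^ i))"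
    by (subst sum.swap) (simp add: sum_distrib_left)
  also have "\<dots> = 0" using powsum_ff[OF ev] d by (intro sum.neutral) auto
  finally show ?thesis .
qed

lemma sqrt_ff:
  assumes ev: "even CARD('f::{field,finite})"
  shows "\<exists>r. r * r = (y::'f)"
proof -
  have two: "(2::'f) = 0" by (rule char2_ff[OF ev])
  have inj: "inj (\<lambda>x::'f. x * x)"
  proof (rule injI)
    fix x y :: 'f assume "x * x = y * y"
    then have "(x + y) * (x + y) = 0"
    proof -
      have "(x + y) * (x + y) = x * x + y * y + 2 * (x * y)" by (simp add: algebra_simps)
      also have "\<dots> = x * x + x * x" using \<open>x * x = y * y\<close> two by simp
      also have "\<dots> = 2 * (x * x)" by (simp only: mult_2)
      finally show ?thesis using two by simp
    qed
    then have "x + y = 0" by simp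
    then have "x = - y" by (simp add: eq_neg_iff_add_eq_0)
    moreover have "- y = y" proof -
      have "y + y = 2 * y" by (simp only: mult_2)
      then have "y + y = 0" using two by simp
      then show ?thesis by (simp add: add_eq_0_iff2)
    qed
    ultimately show "x = y" by simp
  qed
  then have "surj (\<lambda>x::'f. x * x)" by (intro finite_UNIV_inj_surj) simp_all
  then show ?thesis by (metis surjD)
qed


lemma sum_monom_poly:
  fixes a :: "nat \<Rightarrow> 'a::comm_ring_1"
  shows "poly (\<Sum>t<k. monom (a t) t) x = (\<Sum>t<k. a t * x ^ t)"
  by (simp add: poly_sum poly_monom)

lemma coeff_sum_monom_lt:
  "coeff (\<Sum>t<k. monom (a t) t) i = (if i < k then a i else 0)"
  by (simp add: coeff_sum coeff_monom)

lemma degree_sum_monom_lt: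
  assumes "1 \<le> k" shows "degree (\<Sum>t<k. monom (a t) t) \<le> k - 1"
  using assms by (intro degree_le) (auto simp: coeff_sum_monom_lt)

lemma sum_monom_coeff:
  fixes p :: "'a::comm_ring_1 poly"
  assumes "degree p < k" shows "(\<Sum>t<k. monom (coeff p t) t) = p"
  using assms by (intro poly_eqI) (auto simp: coeff_sum_monom_lt coeff_eq_0)

lemma card_nonroots:
  fixes P :: "'f::{field,finite} poly"
  assumes "P \<noteq> 0" "finite S"
  shows "card {x\<in>S. poly P x \<noteq> 0} \<ge> card S - degree P"
proof -
  have "{x\<in>S. poly P x \<noteq> 0} = S - {x\<in>S. poly P x = 0}" by auto
  then have "card {x\<in>S. poly P x \<noteq> 0} = card S - card {x\<in>S. poly P x = 0}"
    using assms by (simp add: card_Diff_subset)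
  with roots_le[OF assms(1), of S] show ?thesis by linarith
qed

lemma prod_linear_poly:
  fixes Z :: "'f::field set"
  assumes "finite Z"
  shows "poly (\<Prod>z\<in>Z. [:-z, 1:]) x = 0 \<longleftrightarrow> x \<in> Z"
    and "degree (\<Prod>z\<in>Z. [:-z, 1:]) \<le> card Z"
    and "(\<Prod>z\<in>Z. [:-z, 1:]) \<noteq> 0"
proof -
  show "poly (\<Prod>z\<in>Z. [:-z, 1:]) x = 0 \<longleftrightarrow> x \<in> Z"
    using assms by (simp add: poly_prod prod_zero_iff)
  have "degree (\<Prod>z\<in>Z. [:-z, 1:]) \<le> sum (degree \<circ> (\<lambda>z. [:-z, 1:])) Z"
    by (rule degree_prod_sum_le[OF assms])
  also have "\<dots> = card Z" by simp
  finally show "degree (\<Prod>z\<in>Z. [:-z, 1:]) \<le> card Z" .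
  show "(\<Prod>z\<in>Z. [:-z, 1:]) \<noteq> 0" using assms by (simp add: prod_zero_iff)
qed


lemma char2_ident:
  fixes m a b a' b' :: "'a::comm_ring_1"
  assumes two: "(2::'a) = 0"
  shows "(m * a) * (m * a') + (m * (a + b)) * (m * (a' + b')) = (m * m) * (a * b' + b * a' + b * b')"
proof -
  have "(m * a) * (m * a') + (m * (a + b)) * (m * (a' + b')) = (m * m) * (2 * (a * a')) + (m * m) * (a * b' + b * a' + b * b')"
    by (simp add: algebra_simps mult_2)
  then show ?thesis using two by simp
qed

lemma main_construction:
  fixes S :: "'f::{field,finite} set"
  assumes ev: "even CARD('f)"
    and cS: "card S = m" and cn: "CARD('n::finite) = 2 * m" and ck: "CARD('k::finite) = ka + kb"
    and ka: "1 \<le> ka" and kb: "1 \<le> kb" and s1: "ka + kb \<le> m" and s2: "2 * kb \<le> m"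
    and dd: "d = min (2 * (m + 1 - ka)) (m + 1 - kb)"
  shows "has_SO_code TYPE('f) TYPE('n) CARD('k) d"
proof -
  have two: "(2::'f) = 0" by (rule char2_ff[OF ev])
  have finS: "finite S" by simp
  have "card (S \<times> (UNIV::bool set)) = CARD('n)" using cS cn by (simp add: card_cartesian_product)
  then obtain \<beta> :: "'n \<Rightarrow> 'f \<times> bool" where \<beta>: "bij_betw \<beta> UNIV (S \<times> UNIV)"
    using finite_same_card_bij[of "UNIV::'n set" "S \<times> (UNIV::bool set)"] by auto
  let ?K = "ka + kb"
  have "card {..<?K} = CARD('k)" using ck by simp
  then obtain \<gamma> :: "nat \<Rightarrow> 'k" where \<gamma>: "bij_betw \<gamma> {..<?K} UNIV"
    using finite_same_card_bij[of "{..<?K}" "UNIV::'k set"] by auto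
  define W :: "'f poly" where "W = (\<Prod>z\<in>UNIV - S. [:-z, 1:])"
  have W0: "poly W x = 0 \<longleftrightarrow> x \<notin> S" for x unfolding W_def
    using prod_linear_poly(1)[of "UNIV - S" x] by simp
  have degW: "degree W \<le> CARD('f) - m" unfolding W_def
    using prod_linear_poly(2)[of "UNIV - S"] cS by (simp add: card_Diff_subset)
  define \<mu> where "\<mu> x = (SOME r. r * r = poly W x)" for x
  have \<mu>sq: "\<mu> x * \<mu> x = poly W x" for x
    unfolding \<mu>_def using sqrt_ff[OF ev] by (rule someI_ex)
  have \<mu>0: "x \<in> S \<Longrightarrow> \<mu> x \<noteq> 0" for x using \<mu>sq[of x] W0[of x] by auto
  define eA where "eA c x = (\<Sum>t<ka. c $ \<gamma> t * x ^ t)" for c :: "'f^'k" and x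
  define eB where "eB c x = (\<Sum>t<kb. c $ \<gamma> (ka + t) * x ^ t)" for c :: "'f^'k" and x
  define PA where "PA c = (\<Sum>t<ka. monom (c $ \<gamma> t) t)" for c :: "'f^'k"
  define PB where "PB c = (\<Sum>t<kb. monom (c $ \<gamma> (ka + t)) t)" for c :: "'f^'k"
  have eA: "eA c x = poly (PA c) x" for c x unfolding eA_def PA_def by (simp add: sum_monom_poly)
  have eB: "eB c x = poly (PB c) x" for c x unfolding eB_def PB_def by (simp add: sum_monom_poly)
  have degA: "degree (PA c) \<le> ka - 1" for c unfolding PA_def by (rule degree_sum_monom_lt[OF ka])
  have degB: "degree (PB c) \<le> kb - 1" for c unfolding PB_def by (rule degree_sum_monom_lt[OF kb])
  define val where "val c p = \<mu> (fst p) * (eA c (fst p) + (if snd p then eB c (fst p) else 0))"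
    for c :: "'f^'k" and p :: "'f \<times> bool"
  define \<Phi> :: "'f^'k \<Rightarrow> 'f^'n" where "\<Phi> c = (\<chi> i. val c (\<beta> i))" for c
  have lin: "Vector_Spaces.linear (*s) (*s) \<Phi>"
  proof (unfold_locales)
    fix c c' :: "'f^'k" and r :: 'f
    have a1: "eA (c + c') x = eA c x + eA c' x" for x by (simp add: eA_def sum.distrib distrib_right)
    have a2: "eB (c + c') x = eB c x + eB c' x" for x by (simp add: eB_def sum.distrib distrib_right)
    have a3: "eA (r *s c) x = r * eA c x" for x by (simp add: eA_def sum_distrib_left mult.assoc)
    have a4: "eB (r *s c) x = r * eB c x" for x by (simp add: eB_def sum_distrib_left mult.assoc)
    have v1: "val (c + c') p = val c p + val c' p" for p by (simp only: val_def a1 a2) (simp add: algebra_simps)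
    have v2: "val (r *s c) p = r * val c p" for p by (simp only: val_def a3 a4) (simp add: algebra_simps)
    show "\<Phi> (c + c') = \<Phi> c + \<Phi> c'"
      by (simp add: \<Phi>_def vec_eq_iff v1)
    show "\<Phi> (r *s c) = r *s \<Phi> c"
      by (simp add: \<Phi>_def vec_eq_iff v2)
  qed
  have czero: "c = 0" if "PA c = 0" "PB c = 0" for c
  proof -
    have "c $ \<gamma> t = 0" if t: "t < ?K" for t
    proof (cases "t < ka")
      case True
      then show ?thesis using arg_cong[OF \<open>PA c = 0\<close>, of "\<lambda>p. coeff p t"]
        by (simp add: PA_def coeff_sum_monom_lt)
    next
      case False
      then have "t - ka < kb" "ka + (t - ka) = t" using t by auto
      then show ?thesis using arg_cong[OF \<open>PB c = 0\<close>, of "\<lambda>p. coeff p (t - ka)"]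
        by (simp add: PB_def coeff_sum_monom_lt)
    qed
    show "c = 0"
    proof (subst vec_eq_iff, intro allI)
      fix i :: 'k
      have "i \<in> \<gamma> ` {..<?K}" using \<gamma> unfolding bij_betw_def by simp
      then obtain t where "t < ?K" "i = \<gamma> t" by auto
      then show "c $ i = 0 $ i" using \<open>\<And>t. t < ?K \<Longrightarrow> c $ \<gamma> t = 0\<close> by simp
    qed
  qed
  define U where "U c = {x\<in>S. eA c x \<noteq> 0}" for c
  define V where "V c = {x\<in>S. eA c x + eB c x \<noteq> 0}" for c
  have wtf: "wt (\<Phi> c) = card (U c) + card (V c)" for c
  proof -
    have img: "\<beta> ` {i. val c (\<beta> i) \<noteq> 0} = {p\<in>S \<times> UNIV. val c p \<noteq> 0}"
    proof -
      have "{i. val c (\<beta> i) \<noteq> 0} = \<beta> -` {p. val c p \<noteq> 0}" by auto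
      moreover have "\<beta> ` (\<beta> -` {p. val c p \<noteq> 0}) = {p. val c p \<noteq> 0} \<inter> range \<beta>"
        by (rule image_vimage_eq)
      ultimately have "\<beta> ` {i. val c (\<beta> i) \<noteq> 0} = {p. val c p \<noteq> 0} \<inter> range \<beta>"
        by simp
      then show ?thesis using \<beta> unfolding bij_betw_def by auto
    qed
    have injb: "inj_on \<beta> {i. val c (\<beta> i) \<noteq> 0}"
      using \<beta> unfolding bij_betw_def by (auto simp: inj_on_def)
    have "wt (\<Phi> c) = card {i. val c (\<beta> i) \<noteq> 0}" by (simp add: wt_def \<Phi>_def)
    also have "\<dots> = card (\<beta> ` {i. val c (\<beta> i) \<noteq> 0})" by (rule card_image[OF injb, symmetric])
    also have "\<dots> = card {p\<in>S \<times> UNIV. val c p \<noteq> 0}" by (simp only: img)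
    finally have e1: "wt (\<Phi> c) = card {p\<in>S \<times> UNIV. val c p \<noteq> 0}" .
    have "{p\<in>S \<times> UNIV. val c p \<noteq> 0} = (\<lambda>x. (x, False)) ` U c \<union> (\<lambda>x. (x, True)) ` V c"
    proof (intro equalityI subsetI)
      fix p assume "p \<in> {p\<in>S \<times> UNIV. val c p \<noteq> 0}"
      then obtain x b where p: "p = (x, b)" "x \<in> S" "val c (x, b) \<noteq> 0" by (cases p) auto
      then show "p \<in> (\<lambda>x. (x, False)) ` U c \<union> (\<lambda>x. (x, True)) ` V c"
        by (cases b) (auto simp: val_def U_def V_def)
    next
      fix p assume "p \<in> (\<lambda>x. (x, False)) ` U c \<union> (\<lambda>x. (x, True)) ` V c"
      then show "p \<in> {p\<in>S \<times> UNIV. val c p \<noteq> 0}" using \<mu>0 by (auto simp: val_def U_def V_def)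
    qed
    moreover have "card ((\<lambda>x. (x, False)) ` U c \<union> (\<lambda>x. (x, True)) ` V c) = card (U c) + card (V c)"
      by (subst card_Un_disjoint) (auto simp: card_image inj_on_def U_def V_def)
    ultimately show ?thesis using e1 by simp
  qed
  have lb: "wt (\<Phi> c) \<ge> d" if c0: "c \<noteq> 0" for c
  proof (cases "PB c = 0")
    case False
    have "card {x\<in>S. poly (PB c) x \<noteq> 0} \<ge> m - degree (PB c)"
      using card_nonroots[OF False finS] cS by simp
    then have h1: "card {x\<in>S. poly (PB c) x \<noteq> 0} \<ge> m + 1 - kb" using degB[of c] kb s1 by linarith
    have "{x\<in>S. poly (PB c) x \<noteq> 0} \<subseteq> U c \<union> V c" by (auto simp: U_def V_def eB)
    then have "card {x\<in>S. poly (PB c) x \<noteq> 0} \<le> card (U c \<union> V c)" by (intro card_mono) auto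
    also have "\<dots> \<le> card (U c) + card (V c)" by (rule card_Un_le)
    finally show ?thesis using h1 wtf[of c] dd by (simp add: min_le_iff_disj)
  next
    case True
    then have A0: "PA c \<noteq> 0" using czero c0 by blast
    have "card {x\<in>S. poly (PA c) x \<noteq> 0} \<ge> m - degree (PA c)"
      using card_nonroots[OF A0 finS] cS by simp
    then have h1: "card (U c) \<ge> m + 1 - ka" using degA[of c] ka s1 by (simp add: U_def eA)
    have "V c = U c" using True by (simp add: U_def V_def eB)
    then show ?thesis using h1 wtf[of c] dd by (simp add: min_le_iff_disj)
  qed
  define mk where "mk a b = (\<chi> i. let t = inv_into {..<?K} \<gamma> i in if t < ka then a t else b (t - ka))"
    for a b :: "nat \<Rightarrow> 'f"
  have mkg: "mk a b $ \<gamma> t = (if t < ka then a t else b (t - ka))" if "t < ?K" for a b t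
    using \<gamma> that unfolding mk_def bij_betw_def by (simp add: inv_into_f_f)
  have PAmk: "PA (mk a b) = (\<Sum>t<ka. monom (a t) t)" for a b
    unfolding PA_def using mkg by (intro sum.cong) auto
  have PBmk: "PB (mk a b) = (\<Sum>t<kb. monom (b t) t)" for a b
    unfolding PB_def using mkg by (intro sum.cong) auto
  have witA: "\<exists>c. c \<noteq> 0 \<and> wt (\<Phi> c) = 2 * (m + 1 - ka)"
  proof -
    have "ka - 1 \<le> card S" using cS s1 by simp
    then obtain Z where Z: "Z \<subseteq> S" "card Z = ka - 1" "finite Z"
      by (rule obtain_subset_with_card_n)
    define p where "p = (\<Prod>z\<in>Z. [:-z, 1:])"
    have pd: "degree p < ka" using prod_linear_poly(2)[OF Z(3)] Z(2) ka unfolding p_def by linarith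
    have p0: "p \<noteq> 0" using prod_linear_poly(3)[OF Z(3)] unfolding p_def .
    define c where "c = mk (coeff p) (\<lambda>_. 0)"
    have "PA c = p" unfolding c_def PAmk using sum_monom_coeff[OF pd] .
    moreover have "PB c = 0" unfolding c_def PBmk by simp
    ultimately have "c \<noteq> 0" using p0 by (auto simp: PA_def)
    moreover have "U c = S - Z" "V c = S - Z"
      using \<open>PA c = p\<close> \<open>PB c = 0\<close> prod_linear_poly(1)[OF Z(3)]
      by (auto simp: U_def V_def eA eB p_def)
    moreover have "card (S - Z) = m + 1 - ka" using Z cS ka s1 by (simp add: card_Diff_subset)
    ultimately show ?thesis using wtf[of c] by auto
  qed
  have witB: "\<exists>c. c \<noteq> 0 \<and> wt (\<Phi> c) = m + 1 - kb"
  proof -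
    have "kb - 1 \<le> card S" using cS s1 by simp
    then obtain Z where Z: "Z \<subseteq> S" "card Z = kb - 1" "finite Z"
      by (rule obtain_subset_with_card_n)
    define p where "p = (\<Prod>z\<in>Z. [:-z, 1:])"
    have pd: "degree p < kb" using prod_linear_poly(2)[OF Z(3)] Z(2) kb unfolding p_def by linarith
    have p0: "p \<noteq> 0" using prod_linear_poly(3)[OF Z(3)] unfolding p_def .
    define c where "c = mk (\<lambda>_. 0) (coeff p)"
    have "PB c = p" unfolding c_def PBmk using sum_monom_coeff[OF pd] .
    moreover have "PA c = 0" unfolding c_def PAmk by simp
    ultimately have "c \<noteq> 0" using p0 by (auto simp: PB_def)
    moreover have "U c = {}" "V c = S - Z"
      using \<open>PB c = p\<close> \<open>PA c = 0\<close> prod_linear_poly(1)[OF Z(3)]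
      by (auto simp: U_def V_def eA eB p_def)
    moreover have "card (S - Z) = m + 1 - kb" using Z cS kb s1 by (simp add: card_Diff_subset)
    ultimately show ?thesis using wtf[of c] by auto
  qed
  have wit: "\<exists>c. c \<noteq> 0 \<and> wt (\<Phi> c) = d"
    using witA witB dd by (cases "2 * (m + 1 - ka) \<le> m + 1 - kb") auto
  have orth: "(\<Sum>i\<in>UNIV. \<Phi> c $ i * \<Phi> c' $ i) = 0" for c c'
  proof -
    define Q where "Q = W * (PA c * PB c' + PB c * PA c' + PB c * PB c')"
    have "(\<Sum>i\<in>UNIV. \<Phi> c $ i * \<Phi> c' $ i) = (\<Sum>i\<in>UNIV. val c (\<beta> i) * val c' (\<beta> i))"
      by (simp add: \<Phi>_def)
    also have "\<dots> = (\<Sum>p\<in>S \<times> UNIV. val c p * val c' p)"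
      using sum.reindex_bij_betw[OF \<beta>, of "\<lambda>p. val c p * val c' p"] by simp
    also have "\<dots> = (\<Sum>x\<in>S. \<Sum>b\<in>UNIV. val c (x, b) * val c' (x, b))"
      by (simp add: sum.cartesian_product)
    also have "\<dots> = (\<Sum>x\<in>S. poly Q x)"
    proof (intro sum.cong refl)
      fix x
      have "(\<Sum>b\<in>UNIV. val c (x, b) * val c' (x, b)) = val c (x, False) * val c' (x, False) + val c (x, True) * val c' (x, True)"
        by (simp add: UNIV_bool)
      also have "\<dots> = (\<mu> x * \<mu> x) * (eA c x * eB c' x + eB c x * eA c' x + eB c x * eB c' x)"
        unfolding val_def fst_conv snd_conv if_True if_False add_0_right by (rule char2_ident[OF two])
      also have "\<dots> = poly Q x" by (simp add: Q_def \<mu>sq eA eB)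
      finally show "(\<Sum>b\<in>UNIV. val c (x, b) * val c' (x, b)) = poly Q x" .
    qed
    also have "\<dots> = (\<Sum>x\<in>UNIV. poly Q x)"
      by (intro sum.mono_neutral_left) (auto simp: Q_def W0)
    also have "\<dots> = 0"
    proof (rule polysum_ff[OF ev])
      have "degree (PA c * PB c') \<le> m - 2"
        using degree_mult_le[of "PA c" "PB c'"] degA[of c] degB[of c'] ka kb s1 by linarith
      moreover have "degree (PB c * PA c') \<le> m - 2"
        using degree_mult_le[of "PB c" "PA c'"] degB[of c] degA[of c'] ka kb s1 by linarith
      moreover have "degree (PB c * PB c') \<le> m - 2"
        using degree_mult_le[of "PB c" "PB c'"] degB[of c] degB[of c'] kb s2 by linarith
      ultimately have "degree (PA c * PB c' + PB c * PA c' + PB c * PB c') \<le> m - 2"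
        by (meson degree_add_le)
      moreover have "m \<le> CARD('f)" using cS card_mono[of UNIV S] by simp
      ultimately show "degree Q \<le> CARD('f) - 2"
        using degree_mult_le[of W "PA c * PB c' + PB c * PA c' + PB c * PB c'"] degW ka kb s1
        unfolding Q_def by linarith
    qed
    finally show ?thesis .
  qed
  have d1: "d \<ge> 1" using dd ka kb s1 by (simp add: min_def split: if_splits)
  show ?thesis by (rule code_lemma[OF lin lb d1 wit orth])
qed


lemma inst:
  assumes ev: "even CARD('f::{field,finite})" and mq: "m \<le> CARD('f)"
    and cn: "CARD('n::finite) = 2 * m" and ck: "CARD('k::finite) = ka + kb"
    and ka: "1 \<le> ka" and kb: "1 \<le> kb" and s1: "ka + kb \<le> m" and s2: "2 * kb \<le> m"
    and dd: "d = min (2 * (m + 1 - ka)) (m + 1 - kb)"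
  shows "has_SO_code TYPE('f) TYPE('n) (ka + kb) d"
proof -
  obtain S :: "'f set" where "S \<subseteq> UNIV" "card S = m" "finite S"
    using obtain_subset_with_card_n[of m "UNIV :: 'f set"] mq by auto
  from main_construction[OF ev \<open>card S = m\<close> cn ck ka kb s1 s2 dd] ck show ?thesis by simp
qed

theorem theorem15:
  fixes F4 :: "'a::{field,finite} itself" and F8 :: "'b::{field,finite} itself"
  assumes "CARD('a) = 4" and "CARD('b) = 8"
  shows "has_SO_code TYPE('a) TYPE(8) 2 4 \<and> has_SO_code TYPE('a) TYPE(8) 3 4 \<and>
         has_SO_code TYPE('a) TYPE(8) 4 4 \<and>
         has_SO_code TYPE('b) TYPE(8) 3 4 \<and> has_SO_code TYPE('b) TYPE(8) 4 4 \<and>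
         has_SO_code TYPE('b) TYPE(10) 4 5 \<and> has_SO_code TYPE('b) TYPE(10) 5 4 \<and>
         has_SO_code TYPE('b) TYPE(12) 4 6 \<and> has_SO_code TYPE('b) TYPE(12) 5 6 \<and>
         has_SO_code TYPE('b) TYPE(12) 6 5 \<and>
         has_SO_code TYPE('b) TYPE(14) 5 7 \<and> has_SO_code TYPE('b) TYPE(14) 6 6 \<and>
         has_SO_code TYPE('b) TYPE(14) 7 6 \<and>
         has_SO_code TYPE('b) TYPE(16) 5 8 \<and> has_SO_code TYPE('b) TYPE(16) 6 8 \<and>
         has_SO_code TYPE('b) TYPE(16) 7 6 \<and> has_SO_code TYPE('b) TYPE(16) 8 6"
proof -
  have ea: "even CARD('a)" using assms by simp
  have eb: "even CARD('b)" using assms by simp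
  have qa: "(4::nat) \<le> CARD('a)" and qb: "(m::nat) \<le> 8 \<Longrightarrow> m \<le> CARD('b)" for m using assms by simp_all
  have a1: "has_SO_code TYPE('a) TYPE(8) (1 + 1) 4" by (rule inst[where 'k=2, OF ea qa]) simp_all
  have a2: "has_SO_code TYPE('a) TYPE(8) (2 + 1) 4" by (rule inst[where 'k=3, OF ea qa]) simp_all
  have a3: "has_SO_code TYPE('a) TYPE(8) (3 + 1) 4" by (rule inst[where 'k=4, OF ea qa]) simp_all
  have b1: "has_SO_code TYPE('b) TYPE(8) (2 + 1) 4" by (rule inst[where 'k=3, OF eb qb[of 4]]) simp_all
  have b2: "has_SO_code TYPE('b) TYPE(8) (3 + 1) 4" by (rule inst[where 'k=4, OF eb qb[of 4]]) simp_all
  have b3: "has_SO_code TYPE('b) TYPE(10) (3 + 1) 5" by (rule inst[where 'k=4, OF eb qb[of 5]]) simp_all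
  have b4: "has_SO_code TYPE('b) TYPE(10) (3 + 2) 4" by (rule inst[where 'k=5, OF eb qb[of 5]]) simp_all
  have b5: "has_SO_code TYPE('b) TYPE(12) (3 + 1) 6" by (rule inst[where 'k=4, OF eb qb[of 6]]) simp_all
  have b6: "has_SO_code TYPE('b) TYPE(12) (4 + 1) 6" by (rule inst[where 'k=5, OF eb qb[of 6]]) simp_all
  have b7: "has_SO_code TYPE('b) TYPE(12) (4 + 2) 5" by (rule inst[where 'k=6, OF eb qb[of 6]]) simp_all
  have b8: "has_SO_code TYPE('b) TYPE(14) (4 + 1) 7" by (rule inst[where 'k=5, OF eb qb[of 7]]) simp_all
  have b9: "has_SO_code TYPE('b) TYPE(14) (4 + 2) 6" by (rule inst[where 'k=6, OF eb qb[of 7]]) simp_all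
  have b10: "has_SO_code TYPE('b) TYPE(14) (5 + 2) 6" by (rule inst[where 'k=7, OF eb qb[of 7]]) simp_all
  have b11: "has_SO_code TYPE('b) TYPE(16) (4 + 1) 8" by (rule inst[where 'k=5, OF eb qb[of 8]]) simp_all
  have b12: "has_SO_code TYPE('b) TYPE(16) (5 + 1) 8" by (rule inst[where 'k=6, OF eb qb[of 8]]) simp_all
  have b13: "has_SO_code TYPE('b) TYPE(16) (4 + 3) 6" by (rule inst[where 'k=7, OF eb qb[of 8]]) simp_all
  have b14: "has_SO_code TYPE('b) TYPE(16) (5 + 3) 6" by (rule inst[where 'k=8, OF eb qb[of 8]]) simp_all
  have a1': "has_SO_code TYPE('a) TYPE(8) 2 4" using a1 by (simp only: one_add_one)
  show ?thesis using a1' a2 a3 b1 b2 b3 b4 b5 b6 b7 b8 b9 b10 b11 b12 b13 b14 by simp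
qed

end
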